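(* For every $k\in\mathbb{N}$, $$\|A^*q_k\|_\infty\le1+\frac{R\kappa_{\mathrm{hess}}}{2}\,\mathrm{dist}(\Omega_k,X_k)^2,$$ $$f^*(q^\star)-f^*(q_k)\le\frac{R\kappa_{\mathrm{hess}}\rho^2}{2L}\,\mathrm{dist}(\Omega_k,X_k)^2,\qquad \|q_k-q^\star\|_2\le\rho\sqrt{R\kappa_{\mathrm{hess}}}\;\mathrm{dist}(\Omega_k,X_k).$$
   Context: Setting: $\Omega\subseteq\mathbb{R}^d$ nonempty open convex; $\mathcal{M}(\Omega)$ finite signed Radon measures with total variation norm $\|\cdot\|_{\mathcal{M}}$, $\mathcal{M}(\Omega')$ those supported in $\Omega'\subseteq\Omega$; $a_1,\dots,a_m\in\mathcal{C}_0(\Omega)\cap\mathcal{C}^2(\Omega)$ with uniformly bounded first and second derivatives; $(A\mu)_i=\int a_i\,d\mu$, $A^*q=\sum_iq_ia_i$. $f:\mathbb{R}^m\to\mathbb{R}$ convex, bounded below, differentiable with $L$-Lipschitz gradient; $f^*$ its conjugate. $J(\mu)=\|\mu\|_{\mathcal{M}}+f(A\mu)$; $(\mathcal{P}(\Omega'))$: $\inf_{\mu\in\mathcal{M}(\Omega')}J(\mu)$; $(\mathcal{D}(\Omega'))$: $\sup\{-f^*(q):|A^*q(x)|\le1\ \forall x\in\Omega'\}$; $(\mathcal{P}),(\mathcal{D})$ for $\Omega'=\Omega$. Standing: all these problems used below have solutions and no duality gap. Exchange algorithm: given $\Omega_0\subseteq\Omega$, $q_k$ is the solution of $(\mathcal{D}(\Omega_k))$,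 $X_k$ the set of local maximizers $x\in\Omega$ of $|A^*q_k|$ with $|A^*q_k(x)|>1$, $\Omega_{k+1}=\Omega_k\cup X_k$. For $Y,Z\subseteq\mathbb{R}^d$: $\mathrm{dist}(Y,Z)=\sup_{z\in Z}\inf_{y\in Y}\|y-z\|_2$ (equal to $0$ if $Z=\emptyset$). Source condition: $(\mathcal{P})$ has a unique solution $\mu^\star=\sum_{i=1}^s\alpha_i^\star\delta_{\xi_i}$ (distinct $\xi_i$, $\alpha_i^\star\ne0$), $q^\star$ is the solution of $(\mathcal{D})$. Constants: $\kappa_{\mathrm{hess}}=\sup_{\|q\|_2\le1}\sup_{x\in\Omega}\|\nabla^2(A^*q)(x)\|_{\mathrm{op}}$; $\bar q$ the minimizer of $f^*$, $R=\sqrt{2L(f^*(0)-f^*(\bar q))}+\|\bar q\|_2$; $\rho=\sqrt{\sup_{w\in\partial f^*(q^\star)}-L\langle w,q^\star\rangle}$, assumed finite. *)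

theory Defs
  imports "HOL-Analysis.Analysis"
begin

text \<open>Functions in C_0(Omega): continuous on Omega and vanishing at the boundary / infinity.\<close>
definition c0_on :: "'a::euclidean_space set \<Rightarrow> ('a \<Rightarrow> real) \<Rightarrow> bool" where
  "c0_on \<Omega> g \<longleftrightarrow> continuous_on \<Omega> g \<and>
     (\<forall>e>0. \<exists>K. compact K \<and> K \<subseteq> \<Omega> \<and> (\<forall>x\<in>\<Omega> - K. \<bar>g x\<bar> < e))"

text \<open>A finite signed (Radon) measure on Omega is represented by a pair (P,N) of finite Borel
  measures carried by Omega; it stands for the set function E -> P(E) - N(E).\<close>
type_synonym 'a smeasure = "'a measure \<times> 'a measure"

definition valid_sm :: "'a::euclidean_space set \<Rightarrow> 'a smeasure \<Rightarrow> bool" where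
  "valid_sm \<Omega> \<mu> \<longleftrightarrow> sets (fst \<mu>) = sets borel \<and> sets (snd \<mu>) = sets borel \<and>
     finite_measure (fst \<mu>) \<and> finite_measure (snd \<mu>) \<and>
     emeasure (fst \<mu>) (UNIV - \<Omega>) = 0 \<and> emeasure (snd \<mu>) (UNIV - \<Omega>) = 0"

definition sm :: "'a smeasure \<Rightarrow> 'a set \<Rightarrow> real" where
  "sm \<mu> E = measure (fst \<mu>) E - measure (snd \<mu>) E"

definition tvnorm :: "'a::euclidean_space smeasure \<Rightarrow> real" where
  "tvnorm \<mu> = Sup {(\<Sum>E\<in>\<E>. \<bar>sm \<mu> E\<bar>) | \<E>. finite \<E> \<and> \<E> \<subseteq> sets borel \<and> disjoint \<E>}"

definition supported_in :: "'a::euclidean_space set \<Rightarrow> 'a smeasure \<Rightarrow> bool" where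
  "supported_in \<Omega>' \<mu> \<longleftrightarrow> (\<forall>E\<in>sets borel. E \<inter> \<Omega>' = {} \<longrightarrow> sm \<mu> E = 0)"

definition Mset :: "'a::euclidean_space set \<Rightarrow> 'a set \<Rightarrow> 'a smeasure set" where
  "Mset \<Omega> \<Omega>' = {\<mu>. valid_sm \<Omega> \<mu> \<and> supported_in \<Omega>' \<mu>}"

definition Aop :: "'a::euclidean_space set \<Rightarrow> ('m::finite \<Rightarrow> 'a \<Rightarrow> real) \<Rightarrow> 'a smeasure \<Rightarrow> real^'m" where
  "Aop \<Omega> a \<mu> = (\<chi> i. (LINT x:\<Omega>|fst \<mu>. a i x) - (LINT x:\<Omega>|snd \<mu>. a i x))"

definition Astar :: "('m::finite \<Rightarrow> 'a \<Rightarrow> real) \<Rightarrow> real^'m \<Rightarrow> 'a \<Rightarrow> real" where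
  "Astar a q x = (\<Sum>i\<in>UNIV. q $ i * a i x)"

definition Jfun :: "'a::euclidean_space set \<Rightarrow> ('m::finite \<Rightarrow> 'a \<Rightarrow> real) \<Rightarrow> (real^'m \<Rightarrow> real)
    \<Rightarrow> 'a smeasure \<Rightarrow> real" where
  "Jfun \<Omega> a f \<mu> = tvnorm \<mu> + f (Aop \<Omega> a \<mu>)"

definition primal_sol :: "'a::euclidean_space set \<Rightarrow> ('m::finite \<Rightarrow> 'a \<Rightarrow> real) \<Rightarrow> (real^'m \<Rightarrow> real)
    \<Rightarrow> 'a set \<Rightarrow> 'a smeasure \<Rightarrow> bool" where
  "primal_sol \<Omega> a f \<Omega>' \<mu> \<longleftrightarrow> \<mu> \<in> Mset \<Omega> \<Omega>' \<and> (\<forall>\<nu>\<in>Mset \<Omega> \<Omega>'. Jfun \<Omega> a f \<mu> \<le> Jfun \<Omega> a f \<nu>)"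

definition fstar :: "(real^'m::finite \<Rightarrow> real) \<Rightarrow> real^'m \<Rightarrow> ereal" where
  "fstar f q = (SUP p. ereal (inner p q - f p))"

definition dual_feas :: "('m::finite \<Rightarrow> 'a \<Rightarrow> real) \<Rightarrow> 'a set \<Rightarrow> (real^'m) set" where
  "dual_feas a \<Omega>' = {q. \<forall>x\<in>\<Omega>'. \<bar>Astar a q x\<bar> \<le> 1}"

definition dual_sol :: "('m::finite \<Rightarrow> 'a \<Rightarrow> real) \<Rightarrow> (real^'m \<Rightarrow> real) \<Rightarrow> 'a set \<Rightarrow> real^'m \<Rightarrow> bool" where
  "dual_sol a f \<Omega>' q \<longleftrightarrow> q \<in> dual_feas a \<Omega>' \<and> (\<forall>p\<in>dual_feas a \<Omega>'. - fstar f p \<le> - fstar f q)"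

definition Xset :: "'a::euclidean_space set \<Rightarrow> ('m::finite \<Rightarrow> 'a \<Rightarrow> real) \<Rightarrow> real^'m \<Rightarrow> 'a set" where
  "Xset \<Omega> a q = {x\<in>\<Omega>. (\<exists>e>0. \<forall>y\<in>\<Omega> \<inter> ball x e. \<bar>Astar a q y\<bar> \<le> \<bar>Astar a q x\<bar>) \<and> \<bar>Astar a q x\<bar> > 1}"

definition hdist :: "'a::euclidean_space set \<Rightarrow> 'a set \<Rightarrow> ereal" where
  "hdist Y Z = (if Z = {} then 0 else (SUP z\<in>Z. INF y\<in>Y. ereal (norm (y - z))))"

definition supnorm_on :: "'a set \<Rightarrow> ('a \<Rightarrow> real) \<Rightarrow> real" where
  "supnorm_on \<Omega> g = (SUP x\<in>\<Omega>. \<bar>g x\<bar>)"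

definition hessA :: "('m::finite \<Rightarrow> 'a \<Rightarrow> ('a::euclidean_space \<Rightarrow>\<^sub>L 'a \<Rightarrow>\<^sub>L real)) \<Rightarrow> real^'m \<Rightarrow> 'a
    \<Rightarrow> ('a \<Rightarrow>\<^sub>L 'a \<Rightarrow>\<^sub>L real)" where
  "hessA D2a q x = (\<Sum>i\<in>UNIV. q $ i *\<^sub>R D2a i x)"

definition kappa_hess :: "'a::euclidean_space set \<Rightarrow> ('m::finite \<Rightarrow> 'a \<Rightarrow> ('a \<Rightarrow>\<^sub>L 'a \<Rightarrow>\<^sub>L real)) \<Rightarrow> real" where
  "kappa_hess \<Omega> D2a = (SUP q\<in>cball (0::real^'m) 1. SUP x\<in>\<Omega>. norm (hessA D2a q x))"

definition subdiff_fstar :: "(real^'m::finite \<Rightarrow> real) \<Rightarrow> real^'m \<Rightarrow> (real^'m) set" where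
  "subdiff_fstar f q = {w. \<forall>p. fstar f p \<ge> fstar f q + ereal (inner w (p - q))}"

definition rho_sq :: "(real^'m::finite \<Rightarrow> real) \<Rightarrow> real \<Rightarrow> real^'m \<Rightarrow> ereal" where
  "rho_sq f L qs = (SUP w\<in>subdiff_fstar f qs. ereal (- L * inner w qs))"

end

theory Submission
  imports Defs
begin


lemma line_deriv:
  fixes g :: "'a::real_normed_vector \<Rightarrow> 'b::real_normed_vector"
  assumes "(g has_derivative blinfun_apply G) (at (x + t *\<^sub>R v))"
  shows "((\<lambda>t. g (x + t *\<^sub>R v)) has_vector_derivative blinfun_apply G v) (at t)"
proof -
  have l: "((\<lambda>t. x + t *\<^sub>R v) has_derivative (\<lambda>h. h *\<^sub>R v)) (at t)"
    by (auto intro!: derivative_eq_intros)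
  have "((\<lambda>t. g (x + t *\<^sub>R v)) has_derivative (blinfun_apply G \<circ> (\<lambda>h. h *\<^sub>R v))) (at t)"
    using diff_chain_at[OF l assms] by (simp add: o_def)
  then show ?thesis unfolding has_vector_derivative_def
    by (simp add: o_def blinfun.scaleR_right)
qed

lemma taylor2_bound:
  fixes g :: "'a::euclidean_space \<Rightarrow> real" and G :: "'a \<Rightarrow> 'a \<Rightarrow>\<^sub>L real"
    and H :: "'a \<Rightarrow> 'a \<Rightarrow>\<^sub>L 'a \<Rightarrow>\<^sub>L real"
  assumes "convex \<Omega>" "x \<in> \<Omega>" "y \<in> \<Omega>"
   and dg: "\<And>z. z \<in> \<Omega> \<Longrightarrow> (g has_derivative blinfun_apply (G z)) (at z)"
   and dG: "\<And>z. z \<in> \<Omega> \<Longrightarrow> (G has_derivative blinfun_apply (H z)) (at z)"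
   and G0: "G x = 0" and hb: "\<And>z. z \<in> \<Omega> \<Longrightarrow> norm (H z) \<le> M"
  shows "\<bar>g y - g x\<bar> \<le> M/2 * (norm (y-x))^2"
proof (cases "y = x")
  case True then show ?thesis using hb[OF assms(2)] by simp
next
  case False
  define v where "v = y - x"
  have inO: "x + t *\<^sub>R v \<in> \<Omega>" if "0 \<le> t" "t \<le> 1" for t
  proof -
    have "x + t *\<^sub>R v = (1 - t) *\<^sub>R x + t *\<^sub>R y" by (simp add: v_def algebra_simps)
    then show ?thesis using assms(1-3) that by (simp add: convex_def)
  qed
  define diff where "diff = (\<lambda>m::nat. if m = 0 then (\<lambda>t. g (x + t *\<^sub>R v))
      else if m = 1 then (\<lambda>t. blinfun_apply (G (x + t *\<^sub>R v)) v)
      else (\<lambda>t. blinfun_apply (blinfun_apply (H (x + t *\<^sub>R v)) v) v))"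
  have D: "\<forall>m t. m < 2 \<and> 0 \<le> t \<and> t \<le> 1 \<longrightarrow> DERIV (diff m) t :> diff (Suc m) t"
  proof (intro allI impI)
    fix m :: nat and t :: real assume a: "m < 2 \<and> 0 \<le> t \<and> t \<le> 1"
    then have z: "x + t *\<^sub>R v \<in> \<Omega>" using inO by auto
    show "DERIV (diff m) t :> diff (Suc m) t"
    proof (cases "m = 0")
      case True
      have "((\<lambda>t. g (x + t *\<^sub>R v)) has_vector_derivative blinfun_apply (G (x + t *\<^sub>R v)) v) (at t)"
        by (rule line_deriv[OF dg[OF z]])
      then show ?thesis using True by (simp add: diff_def has_real_derivative_iff_has_vector_derivative)
    next
      case False
      then have m1: "m = 1" using a by auto
      have "((\<lambda>t. G (x + t *\<^sub>R v)) has_vector_derivative blinfun_apply (H (x + t *\<^sub>R v)) v) (at t)"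
        by (rule line_deriv[OF dG[OF z]])
      then have "((\<lambda>t. blinfun_apply (G (x + t *\<^sub>R v)) v) has_vector_derivative
          blinfun_apply (blinfun_apply (H (x + t *\<^sub>R v)) v) v) (at t)"
        by (intro bounded_linear.has_vector_derivative[where f="\<lambda>w. blinfun_apply w v"]) auto
      then show ?thesis using m1 by (simp add: diff_def has_real_derivative_iff_has_vector_derivative)
    qed
  qed
  obtain t where t: "0 < t \<and> t < 1"
     "diff 0 1 = (\<Sum>m<2. (diff m 0 / fact m) * (1 - 0)^m) + (diff 2 t / fact 2) * (1 - 0)^2"
    using Taylor[of 2 diff "diff 0" 0 1 0 1, OF _ _ D] by auto
  have "diff 1 0 = 0" using G0 by (simp add: diff_def)
  then have eq: "g y = g x + diff 2 t / 2"
    using t(2) by (simp add: diff_def v_def eval_nat_numeral)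
  have "\<bar>diff 2 t\<bar> \<le> norm (H (x + t *\<^sub>R v)) * norm v * norm v"
  proof -
    have "\<bar>diff 2 t\<bar> \<le> norm (blinfun_apply (H (x + t *\<^sub>R v)) v) * norm v"
    proof -
      have "diff 2 t = blinfun_apply (blinfun_apply (H (x + t *\<^sub>R v)) v) v" by (simp add: diff_def)
      then show ?thesis using norm_blinfun[of "blinfun_apply (H (x + t *\<^sub>R v)) v" v] by simp
    qed
    also have "\<dots> \<le> norm (H (x + t *\<^sub>R v)) * norm v * norm v"
      by (intro mult_right_mono norm_blinfun) auto
    finally show ?thesis .
  qed
  also have "\<dots> \<le> M * norm v * norm v"
    using hb[OF inO] t by (intro mult_right_mono) auto
  finally show ?thesis using eq by (simp add: v_def power2_eq_square)
qed


lemma line_deriv_inner: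
  fixes f :: "real^'m::finite \<Rightarrow> real"
  assumes "\<And>p. (f has_derivative (\<lambda>h. inner (gradf p) h)) (at p)"
  shows "((\<lambda>t. f (x + t *\<^sub>R v)) has_real_derivative inner (gradf (x + t *\<^sub>R v)) v) (at t)"
proof -
  have l: "((\<lambda>t. x + t *\<^sub>R v) has_derivative (\<lambda>h. h *\<^sub>R v)) (at t)"
    by (auto intro!: derivative_eq_intros)
  have "((\<lambda>t. f (x + t *\<^sub>R v)) has_derivative ((\<lambda>h. inner (gradf (x + t *\<^sub>R v)) h) \<circ> (\<lambda>h. h *\<^sub>R v))) (at t)"
    using diff_chain_at[OF l assms] by (simp add: o_def)
  then show ?thesis unfolding has_field_derivative_def
    by (simp add: o_def mult.commute[of _ "inner (gradf (x + t *\<^sub>R v)) v"])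
qed

lemma descent:
  fixes f :: "real^'m::finite \<Rightarrow> real"
  assumes fg: "\<And>p. (f has_derivative (\<lambda>h. inner (gradf p) h)) (at p)"
    and lip: "\<And>p p'. norm (gradf p - gradf p') \<le> L * norm (p - p')"
  shows "f y \<le> f x + inner (gradf x) (y - x) + L/2 * (norm (y - x))^2"
proof -
  define v where "v = y - x"
  define \<phi> where "\<phi> = (\<lambda>t. f (x + t *\<^sub>R v) - t * inner (gradf x) v - L/2 * t^2 * (norm v)^2)"
  have "\<phi> 1 \<le> \<phi> 0"
  proof (rule DERIV_nonpos_imp_nonincreasing[of 0 1 \<phi>])
    fix t :: real assume t: "0 \<le> t" "t \<le> 1"
    have d: "DERIV \<phi> t :> inner (gradf (x + t *\<^sub>R v)) v - inner (gradf x) v - L/2 * (2 * t) * (norm v)^2"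
      unfolding \<phi>_def
      by (auto intro!: derivative_eq_intros line_deriv_inner[OF fg])
    have "inner (gradf (x + t *\<^sub>R v)) v - inner (gradf x) v = inner (gradf (x + t *\<^sub>R v) - gradf x) v"
      by (simp add: inner_diff_left)
    also have "\<dots> \<le> norm (gradf (x + t *\<^sub>R v) - gradf x) * norm v" by (rule norm_cauchy_schwarz)
    also have "\<dots> \<le> L * norm (t *\<^sub>R v) * norm v"
      using lip[of "x + t *\<^sub>R v" x] by (intro mult_right_mono) auto
    also have "\<dots> = L/2 * (2 * t) * (norm v)^2" using t by (simp add: power2_eq_square)
    finally show "\<exists>y. DERIV \<phi> t :> y \<and> y \<le> 0" using d by force
  qed auto
  then show ?thesis by (simp add: \<phi>_def v_def)
qed

lemma fstar_ge:
  "fstar f q \<ge> ereal (inner x q - f x)"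
  unfolding fstar_def by (rule SUP_upper) auto

lemma sc_lemma:
  fixes f :: "real^'m::finite \<Rightarrow> real"
  assumes fg: "\<And>p. (f has_derivative (\<lambda>h. inner (gradf p) h)) (at p)"
    and lip: "\<And>p p'. norm (gradf p - gradf p') \<le> L * norm (p - p')"
    and L: "L > 0"
    and eq: "fstar f q = ereal (inner w q - f w)"
  shows "fstar f p \<ge> ereal (inner w q - f w + inner w (p - q) + (norm (p - q))^2 / (2*L))"
proof -
  define g where "g = gradf w"
  have gen: "fstar f p \<ge> ereal (inner w p - f w + (norm (p - g))^2 / (2*L))" for p
  proof -
    define d where "d = p - g"
    define x where "x = w + (1/L) *\<^sub>R d"
    have "f x \<le> f w + inner g (x - w) + L/2 * (norm (x - w))^2"
      unfolding g_def by (rule descent[OF fg lip])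
    then have "inner x p - f x \<ge> inner x p - f w - inner g (x - w) - L/2 * (norm (x - w))^2"
      by simp
    moreover have "inner x p - f w - inner g (x - w) - L/2 * (norm (x - w))^2
        = inner w p - f w + (norm d)^2 / (2*L)"
    proof -
      have p: "p = g + d" by (simp add: d_def)
      have "inner x p - inner g (x - w) = inner w p + (1/L) * inner d d"
        unfolding x_def p by (simp add: inner_add inner_diff algebra_simps inner_commute)
      moreover have "L/2 * (norm (x - w))^2 = (1/(2*L)) * inner d d"
        using L unfolding x_def by (simp add: power2_norm_eq_inner[symmetric] power2_eq_square field_simps)
      ultimately show ?thesis using L by (simp add: power2_norm_eq_inner field_simps)
    qed
    ultimately have "ereal (inner w p - f w + (norm (p - g))^2 / (2*L)) \<le> ereal (inner x p - f x)"
      by (simp add: d_def)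
    also have "\<dots> \<le> fstar f p" by (rule fstar_ge)
    finally show ?thesis .
  qed
  have "ereal (inner w q - f w + (norm (q - g))^2 / (2*L)) \<le> ereal (inner w q - f w)"
    using gen[of q] eq by simp
  then have "(norm (q - g))^2 / (2*L) \<le> 0" by simp
  then have "(norm (q - g))^2 \<le> 0" using L by (simp add: divide_le_0_iff)
  then have "q = g" by simp
  then show ?thesis using gen[of p] by (simp add: inner_diff_right)
qed

lemma grad_ineq:
  fixes f :: "real^'m::finite \<Rightarrow> real"
  assumes cv: "convex_on UNIV f"
    and fg: "\<And>p. (f has_derivative (\<lambda>h. inner (gradf p) h)) (at p)"
  shows "f p \<ge> f x + inner (gradf x) (p - x)"
proof -
  define v where "v = p - x"
  define \<psi> where "\<psi> = (\<lambda>t. f (x + t *\<^sub>R v))"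
  have c: "convex_on UNIV \<psi>"
    unfolding convex_on_def
  proof (intro conjI ballI allI impI, simp)
    fix a b u w :: real assume uw: "0 \<le> u" "0 \<le> w" "u + w = 1"
    have "x + (u *\<^sub>R a + w *\<^sub>R b) *\<^sub>R v = u *\<^sub>R (x + a *\<^sub>R v) + w *\<^sub>R (x + b *\<^sub>R v)"
      using uw by (simp add: algebra_simps flip: scaleR_add_left)
    then show "\<psi> (u *\<^sub>R a + w *\<^sub>R b) \<le> u * \<psi> a + w * \<psi> b"
      using cv uw unfolding convex_on_def \<psi>_def by simp
  qed
  have d: "(\<psi> has_field_derivative inner (gradf x) v) (at 0 within UNIV)"
    unfolding \<psi>_def using line_deriv_inner[OF fg, of x v 0] by simp
  have "\<psi> 1 - \<psi> 0 \<ge> inner (gradf x) v * (1 - 0)"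
    by (rule convex_on_imp_above_tangent[OF c _ _ _ d]) auto
  then show ?thesis by (simp add: \<psi>_def v_def)
qed


lemma meas_borel:
  assumes "sets M = sets borel" "f \<in> borel_measurable borel"
  shows "f \<in> borel_measurable M"
  using assms measurable_cong_sets[OF assms(1) refl] by simp

lemma split_integral:
  fixes h :: "'a::euclidean_space \<Rightarrow> real" and s :: nat
  assumes sM: "sets M = sets borel" and fM: "finite_measure M"
    and O: "open \<Omega>" and hc: "continuous_on \<Omega> h" and hb: "\<And>x. x \<in> \<Omega> \<Longrightarrow> \<bar>h x\<bar> \<le> C" and C0: "0 \<le> C"
    and \<xi>: "\<And>i. i < s \<Longrightarrow> \<xi> i \<in> \<Omega>" and inj: "inj_on \<xi> {..<s}"
  shows "integral\<^sup>L M (\<lambda>x. indicator \<Omega> x *\<^sub>R h x) =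
    integral\<^sup>L M (\<lambda>x. indicator (\<Omega> - \<xi> ` {..<s}) x *\<^sub>R h x) + (\<Sum>i<s. h (\<xi> i) * measure M {\<xi> i})"
proof -
  define B where "B = \<Omega> - \<xi> ` {..<s}"
  have spM: "space M = UNIV" using sets_eq_imp_space_eq[OF sM] by simp
  have pw: "indicator \<Omega> x *\<^sub>R h x = indicator B x *\<^sub>R h x + (\<Sum>i<s. h (\<xi> i) * indicator {\<xi> i} x)" for x
  proof (cases "x \<in> \<xi> ` {..<s}")
    case True
    then obtain j where j: "j < s" "x = \<xi> j" by auto
    have "(\<Sum>i<s. h (\<xi> i) * indicator {\<xi> i} x) = (\<Sum>i<s. if i = j then h x else 0)"
    proof (rule sum.cong[OF refl])
      fix i assume "i \<in> {..<s}"
      then have "(\<xi> i = \<xi> j) = (i = j)" using inj j(1) by (auto dest: inj_onD)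
      then show "h (\<xi> i) * indicator {\<xi> i} x = (if i = j then h x else 0)"
        using j by (auto simp: indicator_def)
    qed
    also have "\<dots> = h x" using j(1) by (subst sum.delta) auto
    finally show ?thesis using True \<xi> j by (simp add: B_def indicator_def)
  next
    case False
    then have "(\<Sum>i<s. h (\<xi> i) * indicator {\<xi> i} x) = 0"
      by (intro sum.neutral) (auto simp: indicator_def)
    then show ?thesis using False by (simp add: B_def indicator_def)
  qed
  have Ob: "\<Omega> \<in> sets borel" using O by simp
  have Bb: "B \<in> sets borel" unfolding B_def
    by (rule sets.Diff[OF borel_open[OF O] borel_closed[OF finite_imp_closed]]) auto
  have m1: "(\<lambda>x. indicator \<Omega> x *\<^sub>R h x) \<in> borel_measurable borel"
    by (rule borel_measurable_continuous_on_indicator[OF Ob hc])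
  have m2: "(\<lambda>x. indicator B x *\<^sub>R h x) \<in> borel_measurable borel"
  proof -
    have "(\<lambda>x. indicator B x *\<^sub>R h x) = (\<lambda>x. indicator B x * (indicator \<Omega> x *\<^sub>R h x))"
      by (auto simp: B_def indicator_def fun_eq_iff)
    also have "\<dots> \<in> borel_measurable borel" using m1 Bb by measurable
    finally show ?thesis .
  qed
  have i2: "integrable M (\<lambda>x. indicator B x *\<^sub>R h x)"
  proof (rule finite_measure.integrable_const_bound[OF fM, where B=C])
    show "AE x in M. norm (indicator B x *\<^sub>R h x) \<le> C"
      using hb C0 by (intro AE_I2) (auto simp: indicator_def B_def)
  qed (rule meas_borel[OF sM m2])
  have ii: "integrable M (indicat_real {\<xi> i})" for i
    using fM sM by (intro integrable_real_indicator)
      (auto simp: finite_measure.emeasure_eq_measure)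
  have "integral\<^sup>L M (\<lambda>x. indicator \<Omega> x *\<^sub>R h x) =
      integral\<^sup>L M (\<lambda>x. indicator B x *\<^sub>R h x + (\<Sum>i<s. h (\<xi> i) * indicator {\<xi> i} x))"
    using pw by simp
  also have "\<dots> = integral\<^sup>L M (\<lambda>x. indicator B x *\<^sub>R h x) + integral\<^sup>L M (\<lambda>x. \<Sum>i<s. h (\<xi> i) * indicator {\<xi> i} x)"
  proof (rule Bochner_Integration.integral_add[OF i2])
    show "integrable M (\<lambda>x. \<Sum>i<s. h (\<xi> i) * indicator {\<xi> i} x)"
      by (intro Bochner_Integration.integrable_sum Bochner_Integration.integrable_mult_right ii)
  qed
  also have "integral\<^sup>L M (\<lambda>x. \<Sum>i<s. h (\<xi> i) * indicator {\<xi> i} x) = (\<Sum>i<s. integral\<^sup>L M (\<lambda>x. h (\<xi> i) * indicator {\<xi> i} x))"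
    using ii by (intro Bochner_Integration.integral_sum) auto
  also have "\<dots> = (\<Sum>i<s. h (\<xi> i) * measure M {\<xi> i})"
    by (simp add: spM)
  finally show ?thesis by (simp add: B_def)
qed

lemma restr_eq:
  fixes F :: "'a::euclidean_space \<Rightarrow> real"
  assumes sP: "sets P = sets borel" and sN: "sets N = sets borel"
    and fP: "finite_measure P" and fN: "finite_measure N" and Bb: "B \<in> sets borel"
    and eq: "\<And>E. E \<in> sets borel \<Longrightarrow> measure P (B \<inter> E) = measure N (B \<inter> E)"
    and Fm: "F \<in> borel_measurable borel"
  shows "integral\<^sup>L P (\<lambda>x. indicator B x *\<^sub>R F x) = integral\<^sup>L N (\<lambda>x. indicator B x *\<^sub>R F x)"
proof -
  have em: "emeasure (density M (\<lambda>x. ennreal (indicator B x))) A = emeasure M (B \<inter> A)"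
    if sM: "sets M = sets borel" and A: "A \<in> sets borel" for M :: "'a measure" and A
  proof -
    have gm: "(\<lambda>x. ennreal (indicator B x)) \<in> borel_measurable M"
      using Bb by (intro meas_borel[OF sM]) auto
    have "emeasure (density M (\<lambda>x. ennreal (indicator B x))) A = (\<integral>\<^sup>+ x. ennreal (indicator B x) * indicator A x \<partial>M)"
      using A sM by (intro emeasure_density[OF gm]) auto
    also have "\<dots> = (\<integral>\<^sup>+ x. indicator (B \<inter> A) x \<partial>M)"
      by (intro nn_integral_cong) (auto simp: indicator_def)
    also have "\<dots> = emeasure M (B \<inter> A)"
      using A Bb sM by (intro nn_integral_indicator) auto
    finally show ?thesis .
  qed
  have dd: "density P (\<lambda>x. ennreal (indicator B x)) = density N (\<lambda>x. ennreal (indicator B x))"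
  proof (rule measure_eqI)
    show "sets (density P (\<lambda>x. ennreal (indicator B x))) = sets (density N (\<lambda>x. ennreal (indicator B x)))"
      using sP sN by simp
  next
    fix A assume "A \<in> sets (density P (\<lambda>x. ennreal (indicator B x)))"
    then have A: "A \<in> sets borel" using sP by simp
    have "emeasure P (B \<inter> A) = emeasure N (B \<inter> A)"
      using eq[OF A] fP fN by (simp add: finite_measure.emeasure_eq_measure)
    then show "emeasure (density P (\<lambda>x. ennreal (indicator B x))) A = emeasure (density N (\<lambda>x. ennreal (indicator B x))) A"
      using em[OF sP A] em[OF sN A] by simp
  qed
  have "integral\<^sup>L P (\<lambda>x. indicator B x *\<^sub>R F x) = integral\<^sup>L (density P (\<lambda>x. ennreal (indicator B x))) F"
    using Bb by (intro integral_density[symmetric] meas_borel[OF sP] Fm) auto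
  also have "\<dots> = integral\<^sup>L (density N (\<lambda>x. ennreal (indicator B x))) F" using dd by simp
  also have "\<dots> = integral\<^sup>L N (\<lambda>x. indicator B x *\<^sub>R F x)"
    using Bb by (intro integral_density meas_borel[OF sN] Fm) auto
  finally show ?thesis .
qed



lemma discrete_Aop:
  fixes h :: "'a::euclidean_space \<Rightarrow> real" and s :: nat
  assumes v: "valid_sm \<Omega> \<mu>"
    and smeq: "\<forall>E\<in>sets borel. sm \<mu> E = (\<Sum>i<s. \<alpha> i * indicator E (\<xi> i))"
    and O: "open \<Omega>" and hc: "continuous_on \<Omega> h" and hb: "\<And>x. x \<in> \<Omega> \<Longrightarrow> \<bar>h x\<bar> \<le> C" and C0: "0 \<le> C"
    and \<xi>: "\<And>i. i < s \<Longrightarrow> \<xi> i \<in> \<Omega>" and inj: "inj_on \<xi> {..<s}"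
  shows "(LINT x:\<Omega>|fst \<mu>. h x) - (LINT x:\<Omega>|snd \<mu>. h x) = (\<Sum>i<s. \<alpha> i * h (\<xi> i))"
proof -
  obtain P N where \<mu>: "\<mu> = (P, N)" by (cases \<mu>)
  have sP: "sets P = sets borel" and sN: "sets N = sets borel" and fP: "finite_measure P"
    and fN: "finite_measure N" using v by (auto simp: valid_sm_def \<mu>)
  define B where "B = \<Omega> - \<xi> ` {..<s}"
  have Bb: "B \<in> sets borel" unfolding B_def
    by (rule sets.Diff[OF borel_open[OF O] borel_closed[OF finite_imp_closed]]) auto
  have Ob: "\<Omega> \<in> sets borel" using O by simp
  have m1: "(\<lambda>x. indicator \<Omega> x *\<^sub>R h x) \<in> borel_measurable borel"
    by (rule borel_measurable_continuous_on_indicator[OF Ob hc])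
  have eqB: "measure P (B \<inter> E) = measure N (B \<inter> E)" if E: "E \<in> sets borel" for E
  proof -
    have "B \<inter> E \<in> sets borel" using Bb E by auto
    then have "sm \<mu> (B \<inter> E) = (\<Sum>i<s. \<alpha> i * indicator (B \<inter> E) (\<xi> i))" using smeq by auto
    also have "\<dots> = 0" by (intro sum.neutral) (auto simp: B_def indicator_def)
    finally show ?thesis by (simp add: sm_def \<mu>)
  qed
  have r: "integral\<^sup>L P (\<lambda>x. indicator B x *\<^sub>R (indicator \<Omega> x *\<^sub>R h x)) = integral\<^sup>L N (\<lambda>x. indicator B x *\<^sub>R (indicator \<Omega> x *\<^sub>R h x))"
    by (rule restr_eq[OF sP sN fP fN Bb eqB m1])
  have ind: "(\<lambda>x. indicator B x *\<^sub>R (indicator \<Omega> x *\<^sub>R h x)) = (\<lambda>x. indicator B x *\<^sub>R h x)"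
    by (auto simp: B_def indicator_def fun_eq_iff)
  have pt: "measure P {\<xi> i} - measure N {\<xi> i} = \<alpha> i" if i: "i < s" for i
  proof -
    have "sm \<mu> {\<xi> i} = (\<Sum>l<s. \<alpha> l * indicator {\<xi> i} (\<xi> l))" using smeq by auto
    also have "\<dots> = (\<Sum>l<s. if l = i then \<alpha> i else 0)"
    proof (rule sum.cong[OF refl])
      fix l assume "l \<in> {..<s}"
      then have "(\<xi> l = \<xi> i) = (l = i)" using inj i by (auto dest: inj_onD)
      then show "\<alpha> l * indicator {\<xi> i} (\<xi> l) = (if l = i then \<alpha> i else 0)"
        by (auto simp: indicator_def)
    qed
    also have "\<dots> = \<alpha> i" using i by (subst sum.delta) auto
    finally show ?thesis by (simp add: sm_def \<mu>)
  qed
  have eP: "(LINT x:\<Omega>|P. h x) = integral\<^sup>L P (\<lambda>x. indicator B x *\<^sub>R h x) + (\<Sum>i<s. h (\<xi> i) * measure P {\<xi> i})"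
    unfolding set_lebesgue_integral_def B_def by (rule split_integral[OF sP fP O hc hb C0 \<xi> inj])
  have eN: "(LINT x:\<Omega>|N. h x) = integral\<^sup>L N (\<lambda>x. indicator B x *\<^sub>R h x) + (\<Sum>i<s. h (\<xi> i) * measure N {\<xi> i})"
    unfolding set_lebesgue_integral_def B_def by (rule split_integral[OF sN fN O hc hb C0 \<xi> inj])
  have r2: "integral\<^sup>L P (\<lambda>x. indicator B x *\<^sub>R h x) = integral\<^sup>L N (\<lambda>x. indicator B x *\<^sub>R h x)"
    using r unfolding ind .
  have "(LINT x:\<Omega>|fst \<mu>. h x) - (LINT x:\<Omega>|snd \<mu>. h x)
     = (\<Sum>i<s. h (\<xi> i) * measure P {\<xi> i}) - (\<Sum>i<s. h (\<xi> i) * measure N {\<xi> i})"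
    unfolding \<mu> fst_conv snd_conv eP eN r2 by simp
  also have "\<dots> = (\<Sum>i<s. h (\<xi> i) * (measure P {\<xi> i} - measure N {\<xi> i}))"
    by (simp add: sum_subtractf right_diff_distrib)
  also have "\<dots> = (\<Sum>i<s. \<alpha> i * h (\<xi> i))"
    using pt by (intro sum.cong) auto
  finally show ?thesis .
qed

lemma tv_ge:
  fixes s :: nat
  assumes v: "valid_sm \<Omega> \<mu>"
    and smeq: "\<forall>E\<in>sets borel. sm \<mu> E = (\<Sum>i<s. \<alpha> i * indicator E (\<xi> i))"
    and inj: "inj_on \<xi> {..<s}"
  shows "(\<Sum>i<s. \<bar>\<alpha> i\<bar>) \<le> tvnorm \<mu>"
proof -
  obtain P N where \<mu>: "\<mu> = (P, N)" by (cases \<mu>)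
  have sP: "sets P = sets borel" and sN: "sets N = sets borel" and fP: "finite_measure P"
    and fN: "finite_measure N" using v by (auto simp: valid_sm_def \<mu>)
  let ?S = "{(\<Sum>E\<in>\<E>. \<bar>sm \<mu> E\<bar>) | \<E>. finite \<E> \<and> \<E> \<subseteq> sets borel \<and> disjoint \<E>}"
  have un: "(\<Sum>E\<in>\<E>. measure M E) \<le> measure M UNIV"
    if sM: "sets M = sets borel" and fM: "finite_measure M" and \<E>: "finite \<E>" "\<E> \<subseteq> sets borel" "disjoint \<E>"
    for M :: "'a measure" and \<E>
  proof -
    have "(\<Sum>E\<in>\<E>. measure M E) = measure M (\<Union>E\<in>\<E>. id E)"
      using \<E> sM fM measure_finite_Union[of \<E> id M]
      by (auto simp: disjoint_family_on_def pairwise_def disjnt_def finite_measure.emeasure_eq_measure)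
    also have "\<dots> \<le> measure M (space M)" by (rule finite_measure.bounded_measure[OF fM])
    also have "space M = UNIV" using sets_eq_imp_space_eq[OF sM] by simp
    finally show ?thesis .
  qed
  have bdd: "bdd_above ?S"
  proof (rule bdd_aboveI)
    fix y assume "y \<in> ?S"
    then obtain \<E> where \<E>: "finite \<E>" "\<E> \<subseteq> sets borel" "disjoint \<E>" and y: "y = (\<Sum>E\<in>\<E>. \<bar>sm \<mu> E\<bar>)" by auto
    have "y \<le> (\<Sum>E\<in>\<E>. measure P E + measure N E)"
      unfolding y sm_def \<mu> by (intro sum_mono) (simp add: abs_le_iff)
    also have "\<dots> \<le> measure P UNIV + measure N UNIV"
      using un[OF sP fP \<E>] un[OF sN fN \<E>] by (simp add: sum.distrib)
    finally show "y \<le> measure P UNIV + measure N UNIV" .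
  qed
  define \<E> where "\<E> = (\<lambda>i. {\<xi> i}) ` {..<s}"
  have injE: "inj_on (\<lambda>i. {\<xi> i}) {..<s}" using inj by (auto simp: inj_on_def)
  have mem: "(\<Sum>E\<in>\<E>. \<bar>sm \<mu> E\<bar>) \<in> ?S"
    unfolding \<E>_def
    using inj by (intro CollectI exI[of _ "(\<lambda>i. {\<xi> i}) ` {..<s}"])
      (auto simp: pairwise_def disjnt_def)
  have "(\<Sum>E\<in>\<E>. \<bar>sm \<mu> E\<bar>) = (\<Sum>i<s. \<bar>sm \<mu> {\<xi> i}\<bar>)"
    unfolding \<E>_def using injE by (simp add: sum.reindex)
  also have "\<dots> = (\<Sum>i<s. \<bar>\<alpha> i\<bar>)"
  proof (rule sum.cong[OF refl])
    fix i assume i: "i \<in> {..<s}"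
    have "sm \<mu> {\<xi> i} = (\<Sum>l<s. \<alpha> l * indicator {\<xi> i} (\<xi> l))" using smeq by auto
    also have "\<dots> = (\<Sum>l<s. if l = i then \<alpha> i else 0)"
    proof (rule sum.cong[OF refl])
      fix l assume "l \<in> {..<s}"
      then have "(\<xi> l = \<xi> i) = (l = i)" using inj i by (auto dest: inj_onD)
      then show "\<alpha> l * indicator {\<xi> i} (\<xi> l) = (if l = i then \<alpha> i else 0)"
        by (auto simp: indicator_def)
    qed
    also have "\<dots> = \<alpha> i" using i by (subst sum.delta) auto
    finally show "\<bar>sm \<mu> {\<xi> i}\<bar> = \<bar>\<alpha> i\<bar>" by simp
  qed
  finally have "(\<Sum>i<s. \<bar>\<alpha> i\<bar>) \<in> ?S" using mem by simp
  then show ?thesis unfolding tvnorm_def using bdd by (rule cSup_upper)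
qed


lemma c0_add: "c0_on \<Omega> g \<Longrightarrow> c0_on \<Omega> h \<Longrightarrow> c0_on \<Omega> (\<lambda>x. g x + h x)"
  unfolding c0_on_def
proof (intro conjI allI impI)
  assume g: "continuous_on \<Omega> g \<and> (\<forall>e>0. \<exists>K. compact K \<and> K \<subseteq> \<Omega> \<and> (\<forall>x\<in>\<Omega> - K. \<bar>g x\<bar> < e))"
    and h: "continuous_on \<Omega> h \<and> (\<forall>e>0. \<exists>K. compact K \<and> K \<subseteq> \<Omega> \<and> (\<forall>x\<in>\<Omega> - K. \<bar>h x\<bar> < e))"
  then show "continuous_on \<Omega> (\<lambda>x. g x + h x)" by (intro continuous_intros) auto
  fix e :: real assume e: "e > 0"
  obtain K1 where K1: "compact K1" "K1 \<subseteq> \<Omega>" "\<forall>x\<in>\<Omega> - K1. \<bar>g x\<bar> < e/2" using g e by (meson half_gt_zero)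
  obtain K2 where K2: "compact K2" "K2 \<subseteq> \<Omega>" "\<forall>x\<in>\<Omega> - K2. \<bar>h x\<bar> < e/2" using h e by (meson half_gt_zero)
  show "\<exists>K. compact K \<and> K \<subseteq> \<Omega> \<and> (\<forall>x\<in>\<Omega> - K. \<bar>g x + h x\<bar> < e)"
  proof (intro exI[of _ "K1 \<union> K2"] conjI ballI)
    fix x assume "x \<in> \<Omega> - (K1 \<union> K2)"
    then have "\<bar>g x\<bar> < e/2" "\<bar>h x\<bar> < e/2" using K1 K2 by auto
    then show "\<bar>g x + h x\<bar> < e" by linarith
  qed (use K1 K2 in auto)
qed

lemma c0_cmult: "c0_on \<Omega> g \<Longrightarrow> c0_on \<Omega> (\<lambda>x. c * g x)"
  unfolding c0_on_def
proof (intro conjI allI impI)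
  assume g: "continuous_on \<Omega> g \<and> (\<forall>e>0. \<exists>K. compact K \<and> K \<subseteq> \<Omega> \<and> (\<forall>x\<in>\<Omega> - K. \<bar>g x\<bar> < e))"
  then show "continuous_on \<Omega> (\<lambda>x. c * g x)" by (intro continuous_intros) auto
  fix e :: real assume e: "e > 0"
  obtain K where K: "compact K" "K \<subseteq> \<Omega>" "\<forall>x\<in>\<Omega> - K. \<bar>g x\<bar> < e / (\<bar>c\<bar> + 1)"
  proof -
    have "e / (\<bar>c\<bar> + 1) > 0" using e by (simp add: add_pos_nonneg)
    then show ?thesis using g that by blast
  qed
  have "\<bar>c * g x\<bar> < e" if "x \<in> \<Omega> - K" for x
  proof -
    have "\<bar>c * g x\<bar> \<le> (\<bar>c\<bar> + 1) * \<bar>g x\<bar>" by (simp add: abs_mult mult_right_mono)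
    also have "\<dots> < (\<bar>c\<bar> + 1) * (e / (\<bar>c\<bar> + 1))"
      using K(3) that by (intro mult_strict_left_mono) auto
    also have "\<dots> = e" by (simp add: add_pos_nonneg)
    finally show ?thesis .
  qed
  then show "\<exists>K. compact K \<and> K \<subseteq> \<Omega> \<and> (\<forall>x\<in>\<Omega> - K. \<bar>c * g x\<bar> < e)" using K by blast
qed

lemma c0_zero: "c0_on \<Omega> (\<lambda>x. 0)"
  unfolding c0_on_def by (auto intro!: exI[of _ "{}"])

lemma c0_sum: "finite I \<Longrightarrow> (\<And>i. i \<in> I \<Longrightarrow> c0_on \<Omega> (f i)) \<Longrightarrow> c0_on \<Omega> (\<lambda>x. \<Sum>i\<in>I. f i x)"
proof (induction I rule: finite_induct)
  case empty then show ?case by (simp add: c0_zero)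
next
  case (insert i I)
  then show ?case by (simp add: c0_add)
qed

lemma c0_Astar: "(\<And>i. c0_on \<Omega> (a i)) \<Longrightarrow> c0_on \<Omega> (Astar a q)"
  unfolding Astar_def by (intro c0_sum c0_cmult) auto

lemma c0_bounded:
  assumes "c0_on \<Omega> g" shows "\<exists>C\<ge>0. \<forall>x\<in>\<Omega>. \<bar>g x\<bar> \<le> C"
proof -
  obtain K where K: "compact K" "K \<subseteq> \<Omega>" "\<forall>x\<in>\<Omega> - K. \<bar>g x\<bar> < 1" and c: "continuous_on \<Omega> g"
    using assms unfolding c0_on_def by (meson zero_less_one)
  have "compact (g ` K)" using K c by (intro compact_continuous_image continuous_on_subset[OF c]) auto
  then obtain B where B: "\<forall>y\<in>g ` K. norm y \<le> B" using compact_imp_bounded bounded_iff by metis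
  show ?thesis
  proof (intro exI[of _ "max 1 B"] conjI ballI)
    fix x assume x: "x \<in> \<Omega>"
    show "\<bar>g x\<bar> \<le> max 1 B"
    proof (cases "x \<in> K")
      case True then have "norm (g x) \<le> B" using B by blast
      then show ?thesis by simp
    next
      case False then have "\<bar>g x\<bar> < 1" using K x by blast
      then show ?thesis by simp
    qed
  qed simp
qed

lemma c0_bdd: "c0_on \<Omega> g \<Longrightarrow> bdd_above ((\<lambda>x. \<bar>g x\<bar>) ` \<Omega>)"
proof -
  assume "c0_on \<Omega> g"
  then obtain C where "\<forall>x\<in>\<Omega>. \<bar>g x\<bar> \<le> C" using c0_bounded by blast
  then show ?thesis by (intro bdd_aboveI2) auto
qed

lemma c0_max:
  assumes "c0_on \<Omega> g" "\<Omega> \<noteq> {}" "(SUP x\<in>\<Omega>. \<bar>g x\<bar>) > 1"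
  shows "\<exists>x\<in>\<Omega>. 1 < \<bar>g x\<bar> \<and> (\<forall>y\<in>\<Omega>. \<bar>g y\<bar> \<le> \<bar>g x\<bar>)"
proof -
  obtain K where K: "compact K" "K \<subseteq> \<Omega>" "\<forall>x\<in>\<Omega> - K. \<bar>g x\<bar> < 1" and c: "continuous_on \<Omega> g"
    using assms unfolding c0_on_def by (meson zero_less_one)
  show ?thesis
  proof (cases "K = {}")
    case True
    then have "(SUP x\<in>\<Omega>. \<bar>g x\<bar>) \<le> 1" using K assms(2) by (intro cSUP_least) auto
    then show ?thesis using assms(3) by simp
  next
    case False
    have "continuous_on K (\<lambda>x. \<bar>g x\<bar>)" using K c by (intro continuous_intros continuous_on_subset[OF c]) auto
    then obtain x where x: "x \<in> K" "\<forall>y\<in>K. \<bar>g y\<bar> \<le> \<bar>g x\<bar>"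
      using continuous_attains_sup[OF K(1) False] by blast
    show ?thesis
    proof (cases "\<bar>g x\<bar> \<le> 1")
      case True
      then have "(SUP x\<in>\<Omega>. \<bar>g x\<bar>) \<le> 1" using K x assms(2)
        by (intro cSUP_least) (auto, smt (verit, best) DiffI)
      then show ?thesis using assms(3) by simp
    next
      case False
      have "\<forall>y\<in>\<Omega>. \<bar>g y\<bar> \<le> \<bar>g x\<bar>"
      proof
        fix y assume y: "y \<in> \<Omega>"
        show "\<bar>g y\<bar> \<le> \<bar>g x\<bar>"
        proof (cases "y \<in> K")
          case True then show ?thesis using x by auto
        next
          case False then show ?thesis using K(3) y \<open>\<not> \<bar>g x\<bar> \<le> 1\<close> by force
        qed
      qed
      moreover have "x \<in> \<Omega>" using x K by auto
      ultimately show ?thesis using False by (intro bexI[of _ x]) auto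
    qed
  qed
qed

lemma c0_small:
  fixes g :: "'a::euclidean_space \<Rightarrow> real"
  assumes "c0_on \<Omega> g" "open \<Omega>" "\<Omega> \<noteq> {}"
  shows "\<exists>y\<in>\<Omega>. \<bar>g y\<bar> < 1"
proof -
  obtain K where K: "compact K" "K \<subseteq> \<Omega>" "\<forall>x\<in>\<Omega> - K. \<bar>g x\<bar> < 1"
    using assms unfolding c0_on_def by (meson zero_less_one)
  have "\<not> \<Omega> \<subseteq> K"
  proof
    assume "\<Omega> \<subseteq> K"
    then have "\<Omega> = K" using K by auto
    then have "closed \<Omega> \<and> open \<Omega>" using K assms by (simp add: compact_imp_closed)
    then have "\<Omega> = UNIV" using clopen assms(3) by blast
    then have "bounded (UNIV :: 'a set)" using K \<open>\<Omega> = K\<close> compact_imp_bounded by metis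
    then show False by simp
  qed
  then show ?thesis using K by auto
qed

lemma Astar_deriv:
  assumes "\<And>i. (a i has_derivative blinfun_apply (Da i x)) (at x)"
  shows "(Astar a q has_derivative blinfun_apply (\<Sum>i\<in>UNIV. q $ i *\<^sub>R Da i x)) (at x)"
proof -
  have "(Astar a q has_derivative (\<lambda>h. \<Sum>i\<in>UNIV. q $ i * blinfun_apply (Da i x) h)) (at x)"
    unfolding Astar_def by (intro has_derivative_sum has_derivative_mult_right assms)
  moreover have "(\<lambda>h. \<Sum>i\<in>UNIV. q $ i * blinfun_apply (Da i x) h) = blinfun_apply (\<Sum>i\<in>UNIV. q $ i *\<^sub>R Da i x)"
    by (auto simp: fun_eq_iff blinfun.sum_left blinfun.scaleR_left)
  ultimately show ?thesis by simp
qed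

lemma DAstar_deriv:
  assumes "\<And>i. (Da i has_derivative blinfun_apply (D2a i x)) (at x)"
  shows "((\<lambda>z. \<Sum>i\<in>UNIV. q $ i *\<^sub>R Da i z) has_derivative blinfun_apply (hessA D2a q x)) (at x)"
proof -
  have "((\<lambda>z. \<Sum>i\<in>UNIV. q $ i *\<^sub>R Da i z) has_derivative (\<lambda>h. \<Sum>i\<in>UNIV. q $ i *\<^sub>R blinfun_apply (D2a i x) h)) (at x)"
    by (intro has_derivative_sum has_derivative_scaleR_right assms)
  moreover have "(\<lambda>h. \<Sum>i\<in>UNIV. q $ i *\<^sub>R blinfun_apply (D2a i x) h) = blinfun_apply (hessA D2a q x)"
    by (auto simp: fun_eq_iff blinfun.sum_left blinfun.scaleR_left hessA_def)
  ultimately show ?thesis by simp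
qed



lemma hess_bound:
  fixes D2a :: "'m::finite \<Rightarrow> 'a::euclidean_space \<Rightarrow> ('a \<Rightarrow>\<^sub>L 'a \<Rightarrow>\<^sub>L real)"
  assumes ne: "\<Omega> \<noteq> {}" and bd: "\<And>i. bounded (D2a i ` \<Omega>)" and z: "z \<in> \<Omega>"
  shows "norm (hessA D2a q z) \<le> norm q * kappa_hess \<Omega> D2a"
proof -
  have "\<forall>i. \<exists>B. \<forall>x\<in>\<Omega>. norm (D2a i x) \<le> B" using bd by (meson bounded_iff imageI)
  then obtain B where B: "\<And>i x. x \<in> \<Omega> \<Longrightarrow> norm (D2a i x) \<le> B i" by metis
  define F where "F = (\<lambda>q'. SUP x\<in>\<Omega>. norm (hessA D2a q' x))"
  have hb: "norm (hessA D2a q' x) \<le> (\<Sum>i\<in>UNIV. \<bar>B i\<bar>)" if "q' \<in> cball 0 1" "x \<in> \<Omega>" for q' x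
  proof -
    have "norm (hessA D2a q' x) \<le> (\<Sum>i\<in>UNIV. norm (q' $ i *\<^sub>R D2a i x))"
      unfolding hessA_def by (rule norm_sum)
    also have "\<dots> \<le> (\<Sum>i\<in>UNIV. \<bar>B i\<bar>)"
    proof (rule sum_mono)
      fix i
      have "\<bar>q' $ i\<bar> \<le> 1" using component_le_norm_cart[of q' i] that by auto
      moreover have "norm (D2a i x) \<le> \<bar>B i\<bar>" using B[OF that(2), of i] by simp
      ultimately show "norm (q' $ i *\<^sub>R D2a i x) \<le> \<bar>B i\<bar>"
        by (simp add: mult_le_one mult_mono' order_trans[OF mult_mono[of _ 1 _ "\<bar>B i\<bar>"]])
    qed
    finally show ?thesis .
  qed
  have bddi: "bdd_above ((\<lambda>x. norm (hessA D2a q' x)) ` \<Omega>)" if "q' \<in> cball 0 1" for q'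
    using hb[OF that] by (intro bdd_aboveI2) auto
  have Fb: "F q' \<le> (\<Sum>i\<in>UNIV. \<bar>B i\<bar>)" if "q' \<in> cball 0 1" for q'
    unfolding F_def using hb[OF that] ne by (intro cSUP_least) auto
  have bddo: "bdd_above (F ` cball 0 1)" using Fb by (intro bdd_aboveI2) auto
  have le: "norm (hessA D2a u z) \<le> kappa_hess \<Omega> D2a" if u: "u \<in> cball 0 1" for u
  proof -
    have "norm (hessA D2a u z) \<le> F u" unfolding F_def using z bddi[OF u] by (intro cSUP_upper)
    also have "\<dots> \<le> kappa_hess \<Omega> D2a" unfolding kappa_hess_def F_def[symmetric]
      using u bddo by (intro cSUP_upper)
    finally show ?thesis .
  qed
  show ?thesis
  proof (cases "q = 0")
    case True
    then show ?thesis by (simp add: hessA_def)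
  next
    case False
    define u where "u = q /\<^sub>R norm q"
    have u: "u \<in> cball 0 1" using False by (simp add: u_def)
    have "hessA D2a q z = norm q *\<^sub>R hessA D2a u z"
      using False by (simp add: hessA_def u_def scaleR_sum_right mult.assoc[symmetric])
    then have "norm (hessA D2a q z) = norm q * norm (hessA D2a u z)" by simp
    also have "\<dots> \<le> norm q * kappa_hess \<Omega> D2a" using le[OF u] by (intro mult_left_mono) auto
    finally show ?thesis .
  qed
qed


lemma ereal_sq_bound:
  assumes "0 \<le> x" "0 \<le> c" "ereal x \<le> d"
  shows "ereal (c * x^2) \<le> ereal c * d^2"
proof (cases d)
  case (real D)
  then have "x \<le> D" using assms by simp
  then have "x^2 \<le> D^2" using assms by (intro power_mono) auto
  then have "c * x^2 \<le> c * D^2" using assms by (intro mult_left_mono) auto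
  then show ?thesis using real by (simp add: power2_eq_square)
next
  case PInf
  show ?thesis
  proof (cases "c = 0")
    case True then show ?thesis using PInf by (simp add: power2_eq_square)
  next
    case False then show ?thesis using PInf assms by (simp add: power2_eq_square)
  qed
next
  case MInf then show ?thesis using assms by simp
qed

lemma hdist_nonneg: "0 \<le> hdist Y Z"
proof (cases "Z = {}")
  case True then show ?thesis by (simp add: hdist_def)
next
  case False
  then obtain z where z: "z \<in> Z" by auto
  have "0 \<le> (INF y\<in>Y. ereal (norm (y - z)))" by (intro INF_greatest) auto
  also have "\<dots> \<le> (SUP z\<in>Z. INF y\<in>Y. ereal (norm (y - z)))" using z by (intro SUP_upper)
  finally show ?thesis using False by (simp add: hdist_def)
qed



lemma C3_lemma:
  fixes d :: ereal and n r T \<rho> K :: real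
  assumes cl3: "n^2 \<le> 2 * r * T" and TE: "ereal T \<le> ereal (K / 2) * d^2"
    and d0: "0 \<le> d" and r0: "0 \<le> r" and \<rho>r: "\<rho>^2 = r" "0 \<le> \<rho>" and Rk0: "0 \<le> K"
    and T0: "0 \<le> T" and n0: "0 \<le> n"
  shows "ereal n \<le> ereal (\<rho> * sqrt K) * d"
proof (cases d)
  case (real D)
  have D0: "0 \<le> D" using d0 real by simp
  have "T \<le> K / 2 * D^2" using TE real by (simp add: power2_eq_square)
  then have "2 * r * T \<le> 2 * r * (K / 2 * D^2)" using r0 by (intro mult_left_mono) auto
  then have "n^2 \<le> 2 * r * (K / 2 * D^2)" using cl3 by linarith
  also have "\<dots> = (\<rho> * sqrt K * D)^2"
    using \<rho>r Rk0 by (simp add: power_mult_distrib)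
  finally have "n^2 \<le> (\<rho> * sqrt K * D)^2" .
  moreover have "0 \<le> \<rho> * sqrt K * D" using \<rho>r Rk0 D0 by simp
  ultimately have "n \<le> \<rho> * sqrt K * D" by (rule power2_le_imp_le)
  then show ?thesis using real by simp
next
  case PInf
  show ?thesis
  proof (cases "\<rho> * sqrt K > 0")
    case True
    then have "\<rho> \<noteq> 0" "K \<noteq> 0" by auto
    then show ?thesis using True PInf by simp
  next
    case False
    have "0 \<le> \<rho> * sqrt K" using \<rho>r(2) Rk0 by simp
    then have z0: "\<rho> * sqrt K = 0" using False by linarith
    then have "\<rho> = 0 \<or> sqrt K = 0" by simp
    then have "\<rho> = 0 \<or> K = 0" by simp
    then have h2: "2 * r * T = 0"
    proof
      assume "\<rho> = 0" then show ?thesis using \<rho>r by simp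
    next
      assume "K = 0" then have "T \<le> 0" using TE PInf by simp
      then show ?thesis using T0 by simp
    qed
    have "n^2 \<le> 0" using cl3 unfolding h2 .
    then have "n = 0" by simp
    then show ?thesis using z0 PInf by simp
  qed
next
  case MInf then show ?thesis using d0 by simp
qed

theorem mainTheorem5:
  fixes \<Omega> :: "'a::euclidean_space set"
    and a :: "'m::finite \<Rightarrow> 'a \<Rightarrow> real"
    and Da :: "'m \<Rightarrow> 'a \<Rightarrow> ('a \<Rightarrow>\<^sub>L real)"
    and D2a :: "'m \<Rightarrow> 'a \<Rightarrow> ('a \<Rightarrow>\<^sub>L 'a \<Rightarrow>\<^sub>L real)"
    and f :: "real^'m \<Rightarrow> real" and gradf :: "real^'m \<Rightarrow> real^'m" and L :: real
    and \<Omega>k :: "nat \<Rightarrow> 'a set" and q :: "nat \<Rightarrow> real^'m"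
    and s :: nat and \<alpha> :: "nat \<Rightarrow> real" and \<xi> :: "nat \<Rightarrow> 'a"
    and qs :: "real^'m" and qbar :: "real^'m"
    and R \<kappa> \<rho> :: real
  assumes \<Omega>: "open \<Omega>" "convex \<Omega>" "\<Omega> \<noteq> {}"
    and a_c0: "\<And>i. c0_on \<Omega> (a i)"
    and a_D: "\<And>i x. x \<in> \<Omega> \<Longrightarrow> (a i has_derivative blinfun_apply (Da i x)) (at x)"
    and a_D2: "\<And>i x. x \<in> \<Omega> \<Longrightarrow> (Da i has_derivative blinfun_apply (D2a i x)) (at x)"
    and a_C2: "\<And>i. continuous_on \<Omega> (D2a i)"
    and a_bdd: "\<And>i. bounded (Da i ` \<Omega>)" "\<And>i. bounded (D2a i ` \<Omega>)"
    and f_convex: "convex_on UNIV f"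
    and f_bdd: "bdd_below (range f)"
    and f_grad: "\<And>p. (f has_derivative (\<lambda>h. inner (gradf p) h)) (at p)"
    and L_pos: "L > 0"
    and f_lip: "\<And>p p'. norm (gradf p - gradf p') \<le> L * norm (p - p')"
    \<comment> \<open>the exchange algorithm\<close>
    and \<Omega>0: "\<Omega>k 0 \<subseteq> \<Omega>"
    and \<Omega>_step: "\<And>k. \<Omega>k (Suc k) = \<Omega>k k \<union> Xset \<Omega> a (q k)"
    and q_sol: "\<And>k. dual_sol a f (\<Omega>k k) (q k)"
    \<comment> \<open>standing assumptions: solutions exist, no duality gap\<close>
    and P_k: "\<And>k. \<exists>\<mu>. primal_sol \<Omega> a f (\<Omega>k k) \<mu> \<and> ereal (Jfun \<Omega> a f \<mu>) = - fstar f (q k)"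
    \<comment> \<open>source condition\<close>
    and \<xi>_in: "\<And>i. i < s \<Longrightarrow> \<xi> i \<in> \<Omega>"
    and \<xi>_inj: "inj_on \<xi> {..<s}"
    and \<alpha>_nz: "\<And>i. i < s \<Longrightarrow> \<alpha> i \<noteq> 0"
    and P_sol: "\<exists>\<mu>. primal_sol \<Omega> a f \<Omega> \<mu> \<and> ereal (Jfun \<Omega> a f \<mu>) = - fstar f qs \<and>
                  (\<forall>E\<in>sets borel. sm \<mu> E = (\<Sum>i<s. \<alpha> i * indicator E (\<xi> i)))"
    and P_unique: "\<And>\<mu>. primal_sol \<Omega> a f \<Omega> \<mu> \<Longrightarrow>
                  (\<forall>E\<in>sets borel. sm \<mu> E = (\<Sum>i<s. \<alpha> i * indicator E (\<xi> i)))"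
    and qs_sol: "dual_sol a f \<Omega> qs"
    \<comment> \<open>constants\<close>
    and \<kappa>_def: "\<kappa> = kappa_hess \<Omega> D2a"
    and qbar_min: "\<And>p. fstar f qbar \<le> fstar f p"
    and R_def: "R = sqrt (2 * L * (real_of_ereal (fstar f 0) - real_of_ereal (fstar f qbar))) + norm qbar"
    and \<rho>_fin: "\<bar>rho_sq f L qs\<bar> \<noteq> \<infinity>"
    and \<rho>_def: "\<rho> = sqrt (real_of_ereal (rho_sq f L qs))"
  shows "ereal (supnorm_on \<Omega> (Astar a (q k))) \<le> 1 + ereal (R * \<kappa> / 2) * (hdist (\<Omega>k k) (Xset \<Omega> a (q k)))\<^sup>2
       \<and> fstar f qs - fstar f (q k) \<le> ereal (R * \<kappa> * \<rho>\<^sup>2 / (2 * L)) * (hdist (\<Omega>k k) (Xset \<Omega> a (q k)))\<^sup>2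
       \<and> ereal (norm (q k - qs)) \<le> ereal (\<rho> * sqrt (R * \<kappa>)) * hdist (\<Omega>k k) (Xset \<Omega> a (q k))"
proof -
  have Osub: "\<Omega>k j \<subseteq> \<Omega>" for j
    by (induction j) (auto simp: \<Omega>_step Xset_def \<Omega>0)
  define g where "g = Astar a (q k)"
  define t where "t = supnorm_on \<Omega> g"
  define d where "d = hdist (\<Omega>k k) (Xset \<Omega> a (q k))"
  have c0g: "c0_on \<Omega> g" unfolding g_def by (rule c0_Astar[OF a_c0])
  have bddg: "bdd_above ((\<lambda>x. \<bar>g x\<bar>) ` \<Omega>)" by (rule c0_bdd[OF c0g])
  have gle_t: "\<bar>g x\<bar> \<le> t" if "x \<in> \<Omega>" for x
    unfolding t_def supnorm_on_def using that bddg by (rule cSUP_upper)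
  have d0: "0 \<le> d" unfolding d_def by (rule hdist_nonneg)
  obtain m where m: "\<And>p. m \<le> f p" using f_bdd by (auto simp: bdd_below_def)
  have fs_lb: "ereal (- f 0) \<le> fstar f p" for p using fstar_ge[of 0 p f] by simp
  have f0_ub: "fstar f 0 \<le> ereal (- m)" unfolding fstar_def
    by (intro SUP_least) (simp add: m)
  have feas0: "0 \<in> dual_feas a S" for S by (simp add: dual_feas_def Astar_def)
  have fk0: "fstar f (q k) \<le> fstar f 0" using q_sol[of k] feas0 unfolding dual_sol_def by auto
  have fs0: "fstar f qs \<le> fstar f 0" using qs_sol feas0 unfolding dual_sol_def by auto
  have qs_feas_k: "qs \<in> dual_feas a (\<Omega>k k)"
    using qs_sol Osub[of k] unfolding dual_sol_def dual_feas_def by auto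
  have fks: "fstar f (q k) \<le> fstar f qs" using q_sol[of k] qs_feas_k unfolding dual_sol_def by auto
  have fin: "fstar f p = ereal (real_of_ereal (fstar f p))" if "fstar f p \<le> fstar f 0" for p
  proof -
    have "fstar f p \<noteq> \<infinity>" using that f0_ub by auto
    moreover have "fstar f p \<noteq> - \<infinity>" using fs_lb[of p] by auto
    ultimately show ?thesis by (cases "fstar f p") auto
  qed
  define F0 where "F0 = real_of_ereal (fstar f 0)"
  define Fk where "Fk = real_of_ereal (fstar f (q k))"
  define Fs where "Fs = real_of_ereal (fstar f qs)"
  have eF0: "fstar f 0 = ereal F0" unfolding F0_def by (rule fin) simp
  have eFk: "fstar f (q k) = ereal Fk" unfolding Fk_def by (rule fin[OF fk0])
  have eFs: "fstar f qs = ereal Fs" unfolding Fs_def by (rule fin[OF fs0])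
  define g0 where "g0 = gradf 0"
  have fg0: "fstar f g0 = ereal (inner 0 g0 - f 0)"
  proof (rule antisym)
    show "fstar f g0 \<le> ereal (inner 0 g0 - f 0)" unfolding fstar_def
    proof (rule SUP_least)
      fix p :: "real^'m"
      have "f p \<ge> f 0 + inner (gradf 0) (p - 0)" by (rule grad_ineq[OF f_convex f_grad])
      then show "ereal (inner p g0 - f p) \<le> ereal (inner 0 g0 - f 0)" by (simp add: g0_def inner_commute)
    qed
    show "ereal (inner 0 g0 - f 0) \<le> fstar f g0" by (rule fstar_ge)
  qed
  have scg0: "ereal (inner 0 g0 - f 0 + inner 0 (p - g0) + (norm (p - g0))^2/(2*L)) \<le> fstar f p" for p
    by (rule sc_lemma[OF f_grad f_lip L_pos fg0])
  have qbar_eq: "qbar = g0"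
  proof -
    have "ereal (- f 0 + (norm (qbar - g0))^2/(2*L)) \<le> ereal (- f 0)"
      using order_trans[OF scg0[of qbar] qbar_min[of g0]] fg0 by simp
    then have "(norm (qbar - g0))^2/(2*L) \<le> 0" by simp
    then have "(norm (qbar - g0))^2 \<le> 0" using L_pos by (simp add: divide_le_0_iff)
    then show ?thesis by simp
  qed
  have fqbar: "real_of_ereal (fstar f qbar) = - f 0" using fg0 qbar_eq by simp
  have nqk: "norm (q k) \<le> R"
  proof -
    have "ereal (- f 0 + (norm (q k - qbar))^2/(2*L)) \<le> ereal F0"
      using order_trans[OF scg0[of "q k"] fk0] eF0 qbar_eq by simp
    then have "(norm (q k - qbar))^2/(2*L) \<le> F0 + f 0" by simp
    then have "(norm (q k - qbar))^2 \<le> 2 * L * (F0 - - f 0)" using L_pos by (simp add: field_simps)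
    then have "norm (q k - qbar) \<le> sqrt (2 * L * (F0 - - f 0))" by (rule real_le_rsqrt)
    moreover have "norm (q k) \<le> norm (q k - qbar) + norm qbar"
      using norm_triangle_ineq[of "q k - qbar" qbar] by simp
    ultimately show ?thesis unfolding R_def F0_def[symmetric] fqbar by simp
  qed
  have R0: "0 \<le> R" using nqk norm_ge_zero order_trans by blast
  have kap: "norm (hessA D2a p z) \<le> norm p * \<kappa>" if "z \<in> \<Omega>" for p z
    unfolding \<kappa>_def by (rule hess_bound[OF \<Omega>(3) a_bdd(2) that])
  have \<kappa>0: "0 \<le> \<kappa>"
  proof -
    obtain z where z: "z \<in> \<Omega>" using \<Omega>(3) by auto
    have "0 \<le> norm (hessA D2a (axis undefined 1 :: real^'m) z)" by simp
    also have "\<dots> \<le> norm (axis undefined 1 :: real^'m) * \<kappa>" by (rule kap[OF z])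
    finally show ?thesis by simp
  qed
  obtain \<mu> where \<mu>: "primal_sol \<Omega> a f \<Omega> \<mu>" "ereal (Jfun \<Omega> a f \<mu>) = - fstar f qs"
    "\<forall>E\<in>sets borel. sm \<mu> E = (\<Sum>i<s. \<alpha> i * indicator E (\<xi> i))"
    using P_sol by blast
  have v\<mu>: "valid_sm \<Omega> \<mu>" using \<mu>(1) by (simp add: primal_sol_def Mset_def)
  define w where "w = Aop \<Omega> a \<mu>"
  have wi: "w $ i = (\<Sum>j<s. \<alpha> j * a i (\<xi> j))" for i
  proof -
    obtain C where C: "C \<ge> 0" "\<forall>x\<in>\<Omega>. \<bar>a i x\<bar> \<le> C" using c0_bounded[OF a_c0[of i]] by blast
    have ct: "continuous_on \<Omega> (a i)" using a_c0[of i] by (simp add: c0_on_def)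
    show ?thesis unfolding w_def Aop_def
      using discrete_Aop[OF v\<mu> \<mu>(3) \<Omega>(1) ct _ C(1) \<xi>_in \<xi>_inj] C(2) by simp
  qed
  have wq: "inner w p = (\<Sum>j<s. \<alpha> j * Astar a p (\<xi> j))" for p
  proof -
    have "inner w p = (\<Sum>i\<in>UNIV. (\<Sum>j<s. \<alpha> j * a i (\<xi> j)) * p $ i)"
      by (simp add: inner_vec_def wi)
    also have "\<dots> = (\<Sum>i\<in>UNIV. \<Sum>j<s. \<alpha> j * (p $ i * a i (\<xi> j)))"
      by (intro sum.cong refl) (simp add: sum_distrib_left mult_ac)
    also have "\<dots> = (\<Sum>j<s. \<Sum>i\<in>UNIV. \<alpha> j * (p $ i * a i (\<xi> j)))" by (rule sum.swap)
    also have "\<dots> = (\<Sum>j<s. \<alpha> j * Astar a p (\<xi> j))"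
      by (simp add: Astar_def sum_distrib_left)
    finally show ?thesis .
  qed
  define c where "c = (\<Sum>j<s. \<bar>\<alpha> j\<bar>)"
  have c0: "0 \<le> c" by (simp add: c_def sum_nonneg)
  have tvc: "c \<le> tvnorm \<mu>" unfolding c_def by (rule tv_ge[OF v\<mu> \<mu>(3) \<xi>_inj])
  have fsq: "fstar f qs = ereal (- tvnorm \<mu> - f w)"
  proof -
    have "fstar f qs = - ereal (Jfun \<Omega> a f \<mu>)" by (metis \<mu>(2) ereal_uminus_uminus)
    then show ?thesis by (simp add: Jfun_def w_def)
  qed
  have "ereal (inner w qs - f w) \<le> fstar f qs" by (rule fstar_ge)
  then have up: "inner w qs \<le> - tvnorm \<mu>" using fsq by simp
  have qsb: "\<bar>Astar a qs (\<xi> j)\<bar> \<le> 1" if "j < s" for j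
    using qs_sol \<xi>_in[OF that] unfolding dual_sol_def dual_feas_def by auto
  have lo: "- c \<le> inner w qs"
  proof -
    have "- c = (\<Sum>j<s. - \<bar>\<alpha> j\<bar>)" by (simp add: c_def sum_negf)
    also have "\<dots> \<le> (\<Sum>j<s. \<alpha> j * Astar a qs (\<xi> j))"
    proof (rule sum_mono)
      fix j assume "j \<in> {..<s}"
      then have "\<bar>\<alpha> j * Astar a qs (\<xi> j)\<bar> \<le> \<bar>\<alpha> j\<bar>"
        using qsb[of j] by (simp add: abs_mult mult_left_le)
      then show "- \<bar>\<alpha> j\<bar> \<le> \<alpha> j * Astar a qs (\<xi> j)" by (simp add: abs_le_iff)
    qed
    finally show ?thesis by (simp add: wq)
  qed
  have wqs: "inner w qs = - c" using lo up tvc by linarith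
  have tveq: "tvnorm \<mu> = c" using lo up tvc by linarith
  have Feq: "fstar f qs = ereal (inner w qs - f w)" using fsq wqs tveq by simp
  have SC: "ereal (inner w qs - f w + inner w (p - qs) + (norm (p - qs))^2/(2*L)) \<le> fstar f p" for p
    by (rule sc_lemma[OF f_grad f_lip L_pos Feq])
  have sub: "w \<in> subdiff_fstar f qs"
    unfolding subdiff_fstar_def
  proof (intro CollectI allI)
    fix p :: "real^'m"
    have "fstar f qs + ereal (inner w (p - qs)) = ereal (inner w qs - f w + inner w (p - qs))"
      using Feq by simp
    also have "\<dots> \<le> ereal (inner w qs - f w + inner w (p - qs) + (norm (p - qs))^2/(2*L))"
      using L_pos by simp
    also have "\<dots> \<le> fstar f p" by (rule SC)
    finally show "fstar f qs + ereal (inner w (p - qs)) \<le> fstar f p" .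
  qed
  have rho_ge: "ereal (- L * inner w qs) \<le> rho_sq f L qs"
    unfolding rho_sq_def using sub by (rule SUP_upper)
  obtain r where r: "rho_sq f L qs = ereal r" using \<rho>_fin by (cases "rho_sq f L qs") auto
  have Lc_r: "L * c \<le> r" using rho_ge r wqs by simp
  have r0: "0 \<le> r" using L_pos c0 Lc_r by (meson mult_nonneg_nonneg less_imp_le order_trans)
  have \<rho>r: "\<rho>^2 = r" "0 \<le> \<rho>" using \<rho>_def r r0 by simp_all
  have cr: "c \<le> r / L" using Lc_r L_pos by (simp add: field_simps)
  define T where "T = max (t - 1) 0"
  have T0: "0 \<le> T" by (simp add: T_def)
  have key: "inner w qs - inner w (q k) \<le> c * T"
  proof -
    have "- inner w (q k) = (\<Sum>j<s. - (\<alpha> j * g (\<xi> j)))" by (simp add: wq g_def sum_negf)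
    also have "\<dots> \<le> (\<Sum>j<s. \<bar>\<alpha> j\<bar> * t)"
    proof (rule sum_mono)
      fix j assume "j \<in> {..<s}"
      then have "\<bar>g (\<xi> j)\<bar> \<le> t" using gle_t \<xi>_in by auto
      then have "\<bar>\<alpha> j * g (\<xi> j)\<bar> \<le> \<bar>\<alpha> j\<bar> * t" by (simp add: abs_mult mult_left_mono)
      then show "- (\<alpha> j * g (\<xi> j)) \<le> \<bar>\<alpha> j\<bar> * t" by (simp add: abs_le_iff)
    qed
    also have "\<dots> = c * t" by (simp add: c_def sum_distrib_right)
    finally have "inner w qs - inner w (q k) \<le> c * (t - 1)" using wqs by (simp add: algebra_simps)
    also have "\<dots> \<le> c * T" using c0 by (intro mult_left_mono) (auto simp: T_def)
    finally show ?thesis .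
  qed
  have SCk: "inner w qs - f w + (inner w (q k) - inner w qs) + (norm (q k - qs))^2/(2*L) \<le> Fk"
    using SC[of "q k"] eFk by (simp add: inner_diff_right)
  have nn: "0 \<le> (norm (q k - qs))^2/(2*L)" using L_pos by simp
  have FsE: "Fs = inner w qs - f w" using Feq eFs by simp
  have Fks: "Fk \<le> Fs" using fks eFk eFs by simp
  have cl2: "Fs - Fk \<le> r / L * T"
  proof -
    have "Fs - Fk \<le> inner w qs - inner w (q k)"
      using SCk FsE nn by linarith
    also have "\<dots> \<le> c * T" by (rule key)
    also have "\<dots> \<le> r / L * T" using cr T0 by (intro mult_right_mono)
    finally show ?thesis .
  qed
  have cl3: "(norm (q k - qs))^2 \<le> 2 * r * T"
  proof -
    have "(norm (q k - qs))^2 / (2*L) \<le> Fk - Fs + (inner w qs - inner w (q k))"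
      using SCk FsE by linarith
    also have "\<dots> \<le> c * T" using key Fks by simp
    finally have "(norm (q k - qs))^2 \<le> 2 * L * (c * T)" using L_pos by (simp add: field_simps)
    also have "\<dots> \<le> 2 * r * T" using Lc_r T0 by (simp add: mult.assoc[symmetric] mult_right_mono)
    finally show ?thesis .
  qed
  have TE: "ereal T \<le> ereal (R * \<kappa> / 2) * d^2"
  proof (cases "t \<le> 1")
    case True
    then have "T = 0" by (simp add: T_def)
    moreover have "0 \<le> ereal (R * \<kappa> / 2) * d^2" using R0 \<kappa>0 d0 by simp
    ultimately show ?thesis by (metis zero_ereal_def)
  next
    case False
    obtain xs where xs: "xs \<in> \<Omega>" "1 < \<bar>g xs\<bar>" "\<forall>y\<in>\<Omega>. \<bar>g y\<bar> \<le> \<bar>g xs\<bar>"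
      using c0_max[OF c0g \<Omega>(3)] False unfolding t_def supnorm_on_def by auto
    have teq: "t = \<bar>g xs\<bar>" unfolding t_def supnorm_on_def using xs by (intro cSup_eq_maximum) auto
    have xsX: "xs \<in> Xset \<Omega> a (q k)" unfolding Xset_def using xs
      by (auto simp: g_def intro!: exI[of _ 1])
    define G where "G = (\<lambda>z. \<Sum>i\<in>UNIV. q k $ i *\<^sub>R Da i z)"
    have dg: "(g has_derivative blinfun_apply (G z)) (at z)" if "z \<in> \<Omega>" for z
      unfolding g_def G_def by (rule Astar_deriv) (rule a_D[OF that])
    have dG: "(G has_derivative blinfun_apply (hessA D2a (q k) z)) (at z)" if "z \<in> \<Omega>" for z
      unfolding G_def by (rule DAstar_deriv) (rule a_D2[OF that])
    have G0: "G xs = 0"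
    proof -
      have mm: "(\<forall>y\<in>\<Omega>. g y \<le> g xs) \<or> (\<forall>y\<in>\<Omega>. g xs \<le> g y)"
      proof (cases "g xs \<ge> 0")
        case True then show ?thesis using xs(3) by (auto simp: abs_le_iff)
      next
        case False then show ?thesis using xs(3) by (auto simp: abs_le_iff)
      qed
      have "blinfun_apply (G xs) = (\<lambda>v. 0)"
        by (rule differential_zero_maxmin[OF xs(1) \<Omega>(1) dg[OF xs(1)] mm])
      then show ?thesis by (intro blinfun_eqI) simp
    qed
    have M: "norm (hessA D2a (q k) z) \<le> R * \<kappa>" if "z \<in> \<Omega>" for z
    proof -
      have "norm (hessA D2a (q k) z) \<le> norm (q k) * \<kappa>" by (rule kap[OF that])
      also have "\<dots> \<le> R * \<kappa>" using nqk \<kappa>0 by (rule mult_right_mono)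
      finally show ?thesis .
    qed
    have tay: "\<bar>g xs\<bar> \<le> \<bar>g y\<bar> + R * \<kappa> / 2 * (norm (y - xs))^2" if y: "y \<in> \<Omega>" for y
    proof -
      have "\<bar>g y - g xs\<bar> \<le> R * \<kappa> / 2 * (norm (y - xs))^2"
        by (rule taylor2_bound[OF \<Omega>(2) xs(1) y dg dG G0 M])
      then show ?thesis by linarith
    qed
    have Rk: "0 < R * \<kappa>"
    proof (rule ccontr)
      assume "\<not> 0 < R * \<kappa>"
      then have "R * \<kappa> / 2 * (norm (y - xs))^2 \<le> 0" for y
        by (intro mult_nonpos_nonneg) auto
      moreover obtain y0 where "y0 \<in> \<Omega>" "\<bar>g y0\<bar> < 1" using c0_small[OF c0g \<Omega>(1) \<Omega>(3)] by blast
      ultimately show False using tay[of y0] xs(2) by (smt (verit))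
    qed
    define x0 where "x0 = sqrt (2 * T / (R * \<kappa>))"
    have x00: "0 \<le> x0" using T0 Rk by (simp add: x0_def)
    have x0sq: "x0^2 = 2 * T / (R * \<kappa>)" using T0 Rk by (simp add: x0_def)
    have Rn: "R \<noteq> 0" "\<kappa> \<noteq> 0" using Rk by auto
    have Tx0: "T = R * \<kappa> / 2 * x0^2" unfolding x0sq using Rn by (simp add: field_simps)
    have Tt: "T = t - 1" using False by (simp add: T_def)
    have x0d: "ereal x0 \<le> d"
    proof (cases "\<Omega>k k = {}")
      case True
      then have "d = \<infinity>" unfolding d_def hdist_def using xsX by (auto simp: top_ereal_def)
      then show ?thesis by simp
    next
      case False
      have "ereal x0 \<le> (INF y\<in>\<Omega>k k. ereal (norm (y - xs)))"
      proof (rule INF_greatest)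
        fix y assume y: "y \<in> \<Omega>k k"
        have "\<bar>g y\<bar> \<le> 1" using q_sol[of k] y unfolding dual_sol_def dual_feas_def g_def by auto
        with tay[of y] Osub[of k] y teq Tt have "T \<le> R * \<kappa> / 2 * (norm (y - xs))^2" by auto
        then have "2 * T / (R * \<kappa>) \<le> (norm (y - xs))^2" using Rk by (simp add: field_simps)
        then have "x0 \<le> sqrt ((norm (y - xs))^2)" unfolding x0_def by (rule real_sqrt_le_mono)
        then show "ereal x0 \<le> ereal (norm (y - xs))" by simp
      qed
      also have "\<dots> \<le> d" unfolding d_def hdist_def using xsX by (auto intro: SUP_upper)
      finally show ?thesis .
    qed
    have "ereal (R * \<kappa> / 2 * x0^2) \<le> ereal (R * \<kappa> / 2) * d^2"
      using Rk by (intro ereal_sq_bound[OF x00 _ x0d]) simp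
    then show ?thesis using Tx0 by metis
  qed
  have tT: "t \<le> 1 + T" by (simp add: T_def)
  have C1: "ereal t \<le> 1 + ereal (R * \<kappa> / 2) * d^2"
  proof -
    have "ereal t \<le> 1 + ereal T" using tT by simp
    also have "\<dots> \<le> 1 + ereal (R * \<kappa> / 2) * d^2" using TE by (rule add_left_mono)
    finally show ?thesis .
  qed
  have C2: "fstar f qs - fstar f (q k) \<le> ereal (R * \<kappa> * \<rho>^2 / (2 * L)) * d^2"
  proof -
    have "fstar f qs - fstar f (q k) = ereal (Fs - Fk)" using eFs eFk by simp
    also have "\<dots> \<le> ereal (r / L) * ereal T" using cl2 by simp
    also have "\<dots> \<le> ereal (r / L) * (ereal (R * \<kappa> / 2) * d^2)"
      using TE r0 L_pos by (intro ereal_mult_left_mono) auto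
    also have "\<dots> = ereal (r / L * (R * \<kappa> / 2)) * d^2"
      by (simp only: mult.assoc[symmetric] times_ereal.simps(1))
    also have "r / L * (R * \<kappa> / 2) = R * \<kappa> * \<rho>^2 / (2 * L)"
      using \<rho>r L_pos by (simp add: field_simps)
    finally show ?thesis .
  qed
  have Rk0: "0 \<le> R * \<kappa>" using R0 \<kappa>0 by simp
  have C3: "ereal (norm (q k - qs)) \<le> ereal (\<rho> * sqrt (R * \<kappa>)) * d"
    by (rule C3_lemma[OF cl3 TE d0 r0 \<rho>r Rk0 T0 norm_ge_zero])
  show ?thesis using C1 C2 C3 unfolding t_def g_def d_def by blast
qed

end
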